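(* Suppose A1–A3 and A4' hold and let $\{x_k\}$ be generated by Algorithm 1. Let $k_1=n_0(\kappa_c/2)$, where for $\delta>0$, $n_0(\delta)=\min\{n\in\mathbb{N}:\ \nu_k\le\delta\|\nabla f(x_k)\|^2\ \text{for all } k\ge n\}$ (well defined by A4'). Then for every $\epsilon>0$ the set $\Omega_\epsilon=\{k\in\mathbb{N}:\ \|\nabla f(x_k)\|>\epsilon\}$ is finite and $$|\Omega_\epsilon|\le k_1+\left[\frac{2\left(f(x_0)-f_{low}+\sum_{i=0}^{k_1-1}\nu_i\right)}{\kappa_c}\right]\epsilon^{-2}.$$
   Context: Let $(X,\langle\cdot,\cdot\rangle)$ be a real Hilbert space with induced norm $\|\cdot\|$, and $f:X\to\mathbb{R}$ Fréchet differentiable with gradient $\nabla f$. Algorithm 1 (general non-monotone descent algorithm): parameters $x_0\in X$, $\alpha_0>0$, $\beta,\rho\in(0,1)$. For $k=0,1,2,\dots$: choose $d_k\in X$ with $\langle\nabla f(x_k),d_k\rangle<0$; then for $l=0,1,2,\dots$ choose a number $\nu_{k,l}\ge 0$ and test $$f(x_k+\alpha_k\beta^l d_k)\le f(x_k)+\rho\alpha_k\beta^l\langle\nabla f(x_k),d_k\rangle+\nu_{k,l};$$ let $l_k$ be the first $l$ for which this holds, set $\nu_k:=\nu_{k,l_k}$, $x_{k+1}=x_k+\alpha_k\beta^{l_k}d_k$ and $\alpha_{k+1}=\alpha_k\beta^{l_k-1}$. It is assumed the algorithm generates infinite sequences (all $l_k$ finite). Assumptions: A1: $\nabla f$ is Lipschitz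 continuous with constant $L>0$. A2: there is $f_{low}\in\mathbb{R}$ with $f(x)\ge f_{low}$ for all $x\in X$. A3: there are constants $c_1,c_2>0$ with $\langle\nabla f(x_k),d_k\rangle\le -c_1\|\nabla f(x_k)\|^2$ and $\|d_k\|\le c_2\|\nabla f(x_k)\|$ for all $k$. A4': $\nu_k=o(\|\nabla f(x_k)\|^2)$, i.e. for every $\delta>0$ there is $n\in\mathbb{N}$ with $\nu_k\le\delta\|\nabla f(x_k)\|^2$ for all $k\ge n$. Constant: $\kappa_c=\min\left\{\rho\beta\alpha_0c_1,\ \frac{2\beta\rho(1-\rho)c_1^2}{Lc_2^2}\right\}$. *)

theory Defs
  imports "HOL-Analysis.Analysis"
begin

end

theory Submission
  imports Defs
begin
lemma descent_lemma:
  fixes f :: "'a::real_inner \<Rightarrow> real" and gf :: "'a \<Rightarrow> 'a"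
  assumes grad: "\<And>y. (f has_derivative (\<lambda>h. gf y \<bullet> h)) (at y)"
    and lip: "\<And>y z. norm (gf y - gf z) \<le> L * norm (y - z)"
  shows "f (y + h) \<le> f y + gf y \<bullet> h + L / 2 * (norm h)\<^sup>2"
proof -
  define \<psi> where "\<psi> t = f (y + t *\<^sub>R h) - t * (gf y \<bullet> h) - L / 2 * t\<^sup>2 * (norm h)\<^sup>2" for t :: real
  have D1: "((\<lambda>t. f (y + t *\<^sub>R h)) has_real_derivative (gf (y + t *\<^sub>R h) \<bullet> h)) (at t)" for t
  proof -
    have "((\<lambda>t. y + t *\<^sub>R h) has_derivative (\<lambda>s. s *\<^sub>R h)) (at t)"
      by (auto intro!: derivative_eq_intros)
    from has_derivative_compose[OF this grad]
    have "((\<lambda>t. f (y + t *\<^sub>R h)) has_derivative (\<lambda>s. gf (y + t *\<^sub>R h) \<bullet> (s *\<^sub>R h))) (at t)" .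
    moreover have "(\<lambda>s. gf (y + t *\<^sub>R h) \<bullet> (s *\<^sub>R h)) = (*) (gf (y + t *\<^sub>R h) \<bullet> h)"
      by (rule ext) simp
    ultimately show ?thesis unfolding has_field_derivative_def by simp
  qed
  have D: "(\<psi> has_real_derivative (gf (y + t *\<^sub>R h) \<bullet> h - gf y \<bullet> h - L * t * (norm h)\<^sup>2)) (at t)" for t
    unfolding \<psi>_def
    by (rule derivative_eq_intros D1 refl | simp)+
  have "\<psi> 1 \<le> \<psi> 0"
  proof (rule DERIV_nonpos_imp_nonincreasing[of 0 1 \<psi>])
    fix t :: real assume t: "0 \<le> t" "t \<le> 1"
    have "gf (y + t *\<^sub>R h) \<bullet> h - gf y \<bullet> h = (gf (y + t *\<^sub>R h) - gf y) \<bullet> h"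
      by (simp add: inner_diff_left)
    also have "\<dots> \<le> norm (gf (y + t *\<^sub>R h) - gf y) * norm h"
      by (rule norm_cauchy_schwarz)
    also have "\<dots> \<le> L * norm (t *\<^sub>R h) * norm h"
      using lip[of "y + t *\<^sub>R h" y] by (simp add: mult_right_mono)
    also have "\<dots> = L * t * (norm h)\<^sup>2" using t by (simp add: power2_eq_square)
    finally show "\<exists>z. (\<psi> has_real_derivative z) (at t) \<and> z \<le> 0"
      using D by force
  qed simp
  then show ?thesis unfolding \<psi>_def by simp
qed
theorem lemma3:
  fixes f :: "'a::{real_inner, complete_space} \<Rightarrow> real"
    and gf :: "'a \<Rightarrow> 'a"
    and x d :: "nat \<Rightarrow> 'a"
    and alpha :: "nat \<Rightarrow> real"
    and l :: "nat \<Rightarrow> nat"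
    and nu :: "nat \<Rightarrow> nat \<Rightarrow> real"
    and x0 :: 'a
    and alpha0 beta rho L flow c1 c2 :: real
  assumes grad: "\<And>y. (f has_derivative (\<lambda>h. gf y \<bullet> h)) (at y)"
    and alpha0: "alpha0 > 0" and beta: "0 < beta" "beta < 1" and rho: "0 < rho" "rho < 1"
    and x_0: "x 0 = x0" and alpha_0: "alpha 0 = alpha0"
    and descent: "\<And>k. gf (x k) \<bullet> d k < 0"
    and nu_nonneg: "\<And>k j. nu k j \<ge> 0"
    and armijo: "\<And>k. f (x k + (alpha k * beta ^ l k) *\<^sub>R d k)
        \<le> f (x k) + rho * alpha k * beta ^ l k * (gf (x k) \<bullet> d k) + nu k (l k)"
    and first: "\<And>k j. j < l k \<Longrightarrow> \<not> (f (x k + (alpha k * beta ^ j) *\<^sub>R d k)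
        \<le> f (x k) + rho * alpha k * beta ^ j * (gf (x k) \<bullet> d k) + nu k j)"
    and x_Suc: "\<And>k. x (Suc k) = x k + (alpha k * beta ^ l k) *\<^sub>R d k"
    and alpha_Suc: "\<And>k. alpha (Suc k) = alpha k * beta powi (int (l k) - 1)"
    and A1: "L > 0" "\<And>y z. norm (gf y - gf z) \<le> L * norm (y - z)"
    and A2: "\<And>y. f y \<ge> flow"
    and A3: "c1 > 0" "c2 > 0"
      "\<And>k. gf (x k) \<bullet> d k \<le> - c1 * (norm (gf (x k)))\<^sup>2"
      "\<And>k. norm (d k) \<le> c2 * norm (gf (x k))"
    and A4': "\<And>\<delta>. \<delta> > 0 \<Longrightarrow> \<exists>n. \<forall>k\<ge>n. nu k (l k) \<le> \<delta> * (norm (gf (x k)))\<^sup>2"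
  shows "\<forall>\<epsilon>>0.
    (let \<kappa> = min (rho * beta * alpha0 * c1) (2 * beta * rho * (1 - rho) * c1\<^sup>2 / (L * c2\<^sup>2));
         k1 = (LEAST n. \<forall>k\<ge>n. nu k (l k) \<le> (\<kappa> / 2) * (norm (gf (x k)))\<^sup>2);
         \<Omega> = {k. norm (gf (x k)) > \<epsilon>}
     in finite \<Omega> \<and>
        real (card \<Omega>) \<le> real k1
          + (2 * (f x0 - flow + (\<Sum>i<k1. nu i (l i))) / \<kappa>) * \<epsilon> powi (-2))"
proof (intro allI impI)
  fix \<epsilon> :: real assume eps: "\<epsilon> > 0"
  define \<kappa> where "\<kappa> = min (rho * beta * alpha0 * c1) (2 * beta * rho * (1 - rho) * c1\<^sup>2 / (L * c2\<^sup>2))"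
  define M where "M = 2 * (1 - rho) * c1 / (L * c2\<^sup>2)"
  define g where "g k = gf (x k)" for k
  define \<nu> where "\<nu> k = nu k (l k)" for k
  have Mpos: "M > 0" unfolding M_def using rho A1 A3 by simp
  have kpos: "\<kappa> > 0" unfolding \<kappa>_def using rho A1 A3 beta alpha0 by simp
  have k_le1: "\<kappa> \<le> rho * beta * c1 * alpha0" unfolding \<kappa>_def by (simp add: mult_ac)
  have k_le2: "\<kappa> \<le> rho * beta * c1 * M" unfolding \<kappa>_def M_def using A1 A3
    by (simp add: power2_eq_square field_simps)
  have gnz: "g k \<noteq> 0" for k using descent[of k] unfolding g_def by auto
  have apos: "alpha k > 0" for k
  proof (induction k)
    case 0 then show ?case using alpha_0 alpha0 by simp
  next
    case (Suc k) then show ?case using alpha_Suc[of k] beta by simp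
  qed
  have aSuc_beta: "alpha (Suc k) * beta = alpha k * beta ^ l k" for k
  proof -
    have "alpha (Suc k) * beta = alpha k * (beta powi (int (l k) - 1) * beta)"
      using alpha_Suc[of k] by (simp add: mult_ac)
    also have "\<dots> = alpha k * beta ^ l k"
      using power_int_minus_mult[of beta "int (l k)"] beta by simp
    finally show ?thesis .
  qed
  have step: "alpha (Suc k) \<ge> min (alpha k) M" for k
  proof (cases "l k = 0")
    case True
    then have "alpha (Suc k) = alpha k / beta" using alpha_Suc[of k]
      by (simp add: power_int_minus_divide divide_inverse)
    moreover have "alpha k / beta \<ge> alpha k" using apos[of k] beta
      by (simp add: le_divide_eq)
    ultimately show ?thesis by simp
  next
    case False
    define j where "j = l k - 1"
    have jl: "j < l k" and lj: "l k = Suc j" using False unfolding j_def by auto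
    define t where "t = alpha k * beta ^ j"
    have tpos: "t > 0" unfolding t_def using apos beta by simp
    have aS: "alpha (Suc k) = t"
    proof -
      have "alpha (Suc k) * beta = t * beta" using aSuc_beta[of k] unfolding t_def lj by (simp add: mult_ac)
      then show ?thesis using beta by simp
    qed
    define gd where "gd = gf (x k) \<bullet> d k"
    have fail: "f (x k + t *\<^sub>R d k) > f (x k) + rho * t * gd + nu k j"
      using first[OF jl] unfolding t_def gd_def by (simp add: mult_ac)
    have dl: "f (x k + t *\<^sub>R d k) \<le> f (x k) + t * gd + L / 2 * (norm (t *\<^sub>R d k))\<^sup>2"
      using descent_lemma[OF grad A1(2), of "x k" "t *\<^sub>R d k"] unfolding gd_def by simp
    have "(1 - rho) * t * (- gd) < L / 2 * t\<^sup>2 * (norm (d k))\<^sup>2"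
      using fail dl nu_nonneg[of k j] tpos by (simp add: power_mult_distrib algebra_simps)
    then have "t * ((1 - rho) * (- gd)) < t * (L / 2 * t * (norm (d k))\<^sup>2)"
      by (simp add: power2_eq_square algebra_simps)
    then have ineq: "(1 - rho) * (- gd) < L / 2 * t * (norm (d k))\<^sup>2"
      using tpos mult_less_cancel_left_pos by blast
    have G: "(norm (g k))\<^sup>2 > 0" using gnz by simp
    have "(1 - rho) * (c1 * (norm (g k))\<^sup>2) \<le> (1 - rho) * (- gd)"
      using A3(3)[of k] rho unfolding gd_def g_def by (intro mult_left_mono) auto
    also have "\<dots> < L / 2 * t * (norm (d k))\<^sup>2" by (rule ineq)
    also have "\<dots> \<le> L / 2 * t * (c2 * norm (g k))\<^sup>2"
      using A3(4)[of k] A1(1) tpos unfolding g_def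
      by (intro mult_left_mono power_mono) auto
    finally have "(1 - rho) * c1 * (norm (g k))\<^sup>2 < (L / 2 * t * c2\<^sup>2) * (norm (g k))\<^sup>2"
      by (simp add: power_mult_distrib mult_ac)
    then have "(1 - rho) * c1 < L / 2 * t * c2\<^sup>2" using G by simp
    then have "M < t" unfolding M_def using A1 A3 by (simp add: field_simps)
    then show ?thesis using aS by simp
  qed
  have alow: "alpha k \<ge> min alpha0 M" for k
  proof (induction k)
    case 0 then show ?case using alpha_0 by simp
  next
    case (Suc k) then show ?case using step[of k] by simp
  qed
  have dec: "f (x (Suc k)) \<le> f (x k) - \<kappa> * (norm (g k))\<^sup>2 + \<nu> k" for k
  proof -
    define t where "t = alpha k * beta ^ l k"
    have t: "t = beta * alpha (Suc k)" using aSuc_beta[of k] unfolding t_def by (simp add: mult.commute)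
    have tpos: "t > 0" unfolding t_def using apos beta by simp
    have "rho * c1 * t \<ge> \<kappa>"
    proof (cases "alpha (Suc k) \<ge> alpha0")
      case True
      then have "rho * beta * c1 * alpha0 \<le> rho * c1 * t" unfolding t
        using rho beta A3 by (simp add: mult_left_mono)
      then show ?thesis using k_le1 by simp
    next
      case False
      then have "alpha (Suc k) \<ge> M" using alow[of "Suc k"] by simp
      then have "rho * beta * c1 * M \<le> rho * c1 * t" unfolding t
        using rho beta A3 by (simp add: mult_left_mono)
      then show ?thesis using k_le2 by simp
    qed
    then have "\<kappa> * (norm (g k))\<^sup>2 \<le> rho * c1 * t * (norm (g k))\<^sup>2"
      by (simp add: mult_right_mono)
    also have "\<dots> \<le> - (rho * t * (gf (x k) \<bullet> d k))"
    proof -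
      have "rho * t > 0" using rho tpos by simp
      from mult_left_mono[OF A3(3)[of k] less_imp_le[OF this]]
      show ?thesis unfolding g_def by (simp add: mult_ac)
    qed
    finally show ?thesis using armijo[of k] x_Suc[of k] unfolding t_def \<nu>_def
      by (simp add: mult_ac)
  qed
  define k1 where "k1 = (LEAST n. \<forall>k\<ge>n. nu k (l k) \<le> (\<kappa> / 2) * (norm (gf (x k)))\<^sup>2)"
  have k1: "\<forall>k\<ge>k1. \<nu> k \<le> (\<kappa> / 2) * (norm (g k))\<^sup>2"
    unfolding k1_def \<nu>_def g_def
    by (rule LeastI_ex) (use A4'[of "\<kappa>/2"] kpos in auto)
  define h where "h i = (if i < k1 then \<nu> i else 0)" for i
  define w where "w i = (if k1 \<le> i then (norm (g i))\<^sup>2 else 0)" for i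
  have hnn: "h i \<ge> 0" for i unfolding h_def \<nu>_def using nu_nonneg by simp
  have wnn: "w i \<ge> 0" for i unfolding w_def by simp
  have dec2: "f (x (Suc k)) \<le> f (x k) - \<kappa> / 2 * w k + h k" for k
  proof (cases "k < k1")
    case True then show ?thesis using dec[of k] kpos unfolding h_def w_def
      by (simp add: mult_nonneg_nonneg) (smt (verit) mult_nonneg_nonneg zero_le_power2)
  next
    case False
    then have "\<nu> k \<le> \<kappa> / 2 * (norm (g k))\<^sup>2" using k1 by simp
    then show ?thesis using dec[of k] False unfolding h_def w_def by simp
  qed
  have sumineq: "f (x N) + \<kappa> / 2 * (\<Sum>i<N. w i) \<le> f x0 + (\<Sum>i<N. h i)" for N
  proof (induction N)
    case 0 then show ?case using x_0 by simp
  next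
    case (Suc N) then show ?case using dec2[of N] by (simp add: algebra_simps)
  qed
  define S where "S = (\<Sum>i<k1. nu i (l i))"
  have hsum: "(\<Sum>i<N. h i) \<le> S" for N
  proof -
    have "(\<Sum>i<N. h i) \<le> (\<Sum>i<N + k1. h i)"
      by (rule sum_mono2) (auto simp: hnn)
    also have "\<dots> = (\<Sum>i<k1. h i)"
      by (rule sum.mono_neutral_right) (auto simp: h_def)
    also have "\<dots> = S" unfolding S_def h_def \<nu>_def by simp
    finally show ?thesis .
  qed
  define B where "B = 2 * (f x0 - flow + S) / \<kappa>"
  have wsum: "(\<Sum>i<N. w i) \<le> B" for N
  proof -
    have "\<kappa> / 2 * (\<Sum>i<N. w i) \<le> f x0 - flow + S"
      using sumineq[of N] hsum[of N] A2[of "x N"] by linarith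
    then show ?thesis unfolding B_def using kpos by (simp add: field_simps)
  qed
  define \<Omega> where "\<Omega> = {k. norm (gf (x k)) > \<epsilon>}"
  define \<Omega>' where "\<Omega>' = \<Omega> \<inter> {k1..}"
  have fin_bound: "real (card F) * \<epsilon>\<^sup>2 \<le> B" if F: "finite F" "F \<subseteq> \<Omega>'" for F
  proof -
    define N where "N = Suc (Max (insert 0 F))"
    have FN: "F \<subseteq> {..<N}" unfolding N_def using F(1) by (auto simp: less_Suc_eq_le)
    have "real (card F) * \<epsilon>\<^sup>2 = (\<Sum>i\<in>F. \<epsilon>\<^sup>2)" by simp
    also have "\<dots> \<le> (\<Sum>i\<in>F. w i)"
    proof (rule sum_mono)
      fix i assume "i \<in> F"
      then have "norm (g i) > \<epsilon>" "k1 \<le> i" using F(2) unfolding \<Omega>'_def \<Omega>_def g_def by auto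
      then show "\<epsilon>\<^sup>2 \<le> w i" unfolding w_def using eps
        by (simp add: power_strict_mono less_imp_le)
    qed
    also have "\<dots> \<le> (\<Sum>i<N. w i)" by (rule sum_mono2) (use FN wnn in auto)
    also have "\<dots> \<le> B" by (rule wsum)
    finally show ?thesis .
  qed
  have e2: "\<epsilon>\<^sup>2 > 0" using eps by simp
  have fin': "finite \<Omega>'"
  proof (rule ccontr)
    assume "infinite \<Omega>'"
    obtain n :: nat where n: "real n > B / \<epsilon>\<^sup>2" using reals_Archimedean2 by blast
    obtain F where "F \<subseteq> \<Omega>'" "finite F" "card F = n"
      using infinite_arbitrarily_large[OF \<open>infinite \<Omega>'\<close>] by blast
    with fin_bound have "real n * \<epsilon>\<^sup>2 \<le> B" by blast
    with n e2 show False by (simp add: divide_less_eq)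
  qed
  have card': "real (card \<Omega>') \<le> B * \<epsilon> powi (-2)"
    using fin_bound[OF fin' subset_refl] e2
    by (simp add: power_int_minus_divide field_simps)
  have sub: "\<Omega> \<subseteq> {..<k1} \<union> \<Omega>'" unfolding \<Omega>'_def by auto
  have finO: "finite \<Omega>" using fin' by (rule finite_subset[OF sub, simplified])
  have "card \<Omega> \<le> card ({..<k1} \<union> \<Omega>')" by (rule card_mono) (use fin' sub in auto)
  also have "\<dots> \<le> k1 + card \<Omega>'" using card_Un_le[of "{..<k1}" \<Omega>'] by simp
  finally have "real (card \<Omega>) \<le> real k1 + real (card \<Omega>')" by linarith
  with card' finO show "let \<kappa> = min (rho * beta * alpha0 * c1) (2 * beta * rho * (1 - rho) * c1\<^sup>2 / (L * c2\<^sup>2));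
         k1 = (LEAST n. \<forall>k\<ge>n. nu k (l k) \<le> (\<kappa> / 2) * (norm (gf (x k)))\<^sup>2);
         \<Omega> = {k. norm (gf (x k)) > \<epsilon>}
     in finite \<Omega> \<and>
        real (card \<Omega>) \<le> real k1
          + (2 * (f x0 - flow + (\<Sum>i<k1. nu i (l i))) / \<kappa>) * \<epsilon> powi (-2)"
    unfolding Let_def \<kappa>_def[symmetric] k1_def[symmetric] \<Omega>_def[symmetric] S_def[symmetric] B_def[symmetric]
    by simp
qed

end
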